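(* Let $A\in\mathbb{R}^{n\times r}$, $L\in\mathbb{R}^{s\times n}$ and $0<\alpha\le\beta$ be such that $\alpha\|Ay\|_1\le\|LAy\|_1\le\beta\|Ay\|_1$ for all $y\in\mathbb{R}^r$. Then for every integer $t\ge1$ and every $X\in\mathbb{R}^{r\times t}$, $$\frac{\alpha}{2}\|AX\|_{1,2}\le\|LAX\|_{1,2}\le2\beta\|AX\|_{1,2}.$$
   Context: For a matrix $M$, $\|M\|_{1,2}=\sum_i\|M_{i*}\|_2$ is the sum of Euclidean norms of its rows. *)

theory Defs
  imports "HOL-Analysis.Analysis"
begin

definition l1norm :: "real ^ 'n \<Rightarrow> real" where
  "l1norm v = (\<Sum>i\<in>UNIV. \<bar>v $ i\<bar>)"

definition norm12 :: "real ^ 'c ^ 'r \<Rightarrow> real" where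
  "norm12 M = (\<Sum>i\<in>UNIV. sqrt (\<Sum>j\<in>UNIV. (M $ i $ j)\<^sup>2))"

end

theory Submission
  imports Defs
begin

definition sg :: "bool \<Rightarrow> real" where "sg b = (if b then 1 else -1)"

definition SJ :: "'t set \<Rightarrow> ('t \<Rightarrow> real) \<Rightarrow> ('t \<Rightarrow> bool) \<Rightarrow> real" where
  "SJ J v e = (\<Sum>j\<in>J. sg (e j) * v j)"

lemma sg_sq[simp]: "sg b * sg b = 1" "(sg b)^2 = 1"
  by (auto simp: sg_def)

lemma odd_zero:
  fixes J :: "'t::finite set"
  assumes "a \<notin> J"
  shows "(\<Sum>e\<in>(UNIV::('t \<Rightarrow> bool) set). g (SJ J v e) * sg (e a)) = 0"
proof -
  define fl where "fl = (\<lambda>e::'t\<Rightarrow>bool. e(a := \<not> e a))"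
  have inv: "fl (fl e) = e" for e by (auto simp: fl_def)
  have S: "SJ J v (fl e) = SJ J v e" for e
    unfolding SJ_def fl_def using assms by (intro sum.cong) auto
  have s: "sg (fl e a) = - sg (e a)" for e by (auto simp: fl_def sg_def)
  have "(\<Sum>e\<in>(UNIV::('t \<Rightarrow> bool) set). g (SJ J v e) * sg (e a))
      = (\<Sum>e\<in>(UNIV::('t \<Rightarrow> bool) set). g (SJ J v (fl e)) * sg (fl e a))"
    by (rule sum.reindex_bij_witness[where i=fl and j=fl]) (auto simp: inv)
  also have "\<dots> = - (\<Sum>e\<in>(UNIV::('t \<Rightarrow> bool) set). g (SJ J v e) * sg (e a))"
    by (simp add: S s sum_negf)
  finally show ?thesis by simp
qed

lemma SJ_insert: "finite J \<Longrightarrow> a \<notin> J \<Longrightarrow> SJ (insert a J) v e = SJ J v e + sg (e a) * v a"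
  by (simp add: SJ_def)


lemma m2:
  fixes J :: "'t::finite set"
  assumes "finite J"
  shows "(\<Sum>e\<in>(UNIV::('t \<Rightarrow> bool) set). (SJ J v e)^2) = real CARD('t \<Rightarrow> bool) * (\<Sum>j\<in>J. (v j)^2)"
using assms proof (induction J rule: finite_induct)
  case empty then show ?case by (simp add: SJ_def)
next
  case (insert a J)
  have eq: "(SJ (insert a J) v e)^2 = (SJ J v e)^2 + 2 * v a * (SJ J v e * sg (e a)) + (v a)^2" for e
    using insert(1,2) by (simp add: SJ_insert power2_eq_square algebra_simps)
  have z: "(\<Sum>e\<in>(UNIV::('t \<Rightarrow> bool) set). SJ J v e * sg (e a)) = 0"
    using odd_zero[OF insert(2), of "\<lambda>x. x" v] by simp
  show ?case
    unfolding eq sum.distrib using insert z by (simp add: sum_distrib_left[symmetric] algebra_simps)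
qed

lemma m4:
  fixes J :: "'t::finite set"
  assumes "finite J"
  shows "(\<Sum>e\<in>(UNIV::('t \<Rightarrow> bool) set). (SJ J v e)^4) \<le> 3 * real CARD('t \<Rightarrow> bool) * (\<Sum>j\<in>J. (v j)^2)^2"
using assms proof (induction J rule: finite_induct)
  case empty then show ?case by (simp add: SJ_def)
next
  case (insert a J)
  have s3: "sg b ^ 3 = sg b" "sg b ^ 4 = 1" for b by (auto simp: sg_def)
  have eq: "(SJ (insert a J) v e)^4 = (SJ J v e)^4 + 4 * v a * ((SJ J v e)^3 * sg (e a))
     + 6 * (v a)^2 * (SJ J v e)^2 + 4 * (v a)^3 * (SJ J v e * sg (e a)) + (v a)^4" for e
  proof -
    have "(SJ (insert a J) v e)^4 = (SJ J v e + sg (e a) * v a)^4" using insert(1,2) by (simp add: SJ_insert)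
    also have "\<dots> = (SJ J v e)^4 + 4 * v a * ((SJ J v e)^3 * sg (e a))
     + 6 * (v a)^2 * (SJ J v e)^2 * (sg (e a))^2 + 4 * (v a)^3 * (SJ J v e * sg (e a)^3) + (v a)^4 * sg (e a)^4"
      by (simp del: sg_sq add: power2_eq_square power3_eq_cube power4_eq_xxxx algebra_simps)
    finally show ?thesis by (simp add: s3)
  qed
  have z1: "(\<Sum>e\<in>(UNIV::('t \<Rightarrow> bool) set). SJ J v e * sg (e a)) = 0"
    using odd_zero[OF insert(2), of "\<lambda>x. x" v] by simp
  have z3: "(\<Sum>e\<in>(UNIV::('t \<Rightarrow> bool) set). (SJ J v e)^3 * sg (e a)) = 0"
    using odd_zero[OF insert(2), of "\<lambda>x. x^3" v] by simp
  define Q where "Q = (\<Sum>j\<in>J. (v j)^2)"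
  define N where "N = real CARD('t \<Rightarrow> bool)"
  have Q0: "Q \<ge> 0" unfolding Q_def by (simp add: sum_nonneg)
  have N0: "N \<ge> 0" unfolding N_def by simp
  have "(\<Sum>e\<in>(UNIV::('t \<Rightarrow> bool) set). (SJ (insert a J) v e)^4)
      = (\<Sum>e\<in>(UNIV::('t \<Rightarrow> bool) set). (SJ J v e)^4) + 6 * (v a)^2 * (N * Q) + N * (v a)^4"
    unfolding eq sum.distrib using z1 z3 m2[OF insert(1), of v]
    by (simp add: sum_distrib_left[symmetric] N_def Q_def)
  also have "\<dots> \<le> 3 * N * Q^2 + 6 * (v a)^2 * (N * Q) + N * (v a)^4"
    using insert(3) by (simp add: N_def Q_def)
  also have "\<dots> \<le> 3 * N * (Q + (v a)^2)^2"
  proof -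
    have "3 * N * (Q + (v a)^2)^2 - (3 * N * Q^2 + 6 * (v a)^2 * (N * Q) + N * (v a)^4) = 2 * (N * (v a)^4)"
      by algebra
    moreover have "0 \<le> N * (v a)^4" using N0 by simp
    ultimately show ?thesis by linarith
  qed
  finally show ?case using insert(1,2) by (simp add: N_def Q_def add.commute)
qed


lemma avg_bounds:
  fixes v :: "'t::finite \<Rightarrow> real"
  defines "N \<equiv> real CARD('t \<Rightarrow> bool)" and "Q \<equiv> (\<Sum>j\<in>UNIV. (v j)^2)"
  shows "N * sqrt Q / 2 \<le> (\<Sum>e\<in>(UNIV::('t \<Rightarrow> bool) set). \<bar>SJ UNIV v e\<bar>)
       \<and> (\<Sum>e\<in>(UNIV::('t \<Rightarrow> bool) set). \<bar>SJ UNIV v e\<bar>) \<le> N * sqrt Q"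
proof -
  define S where "S = SJ (UNIV::'t set) v"
  define P where "P = (\<Sum>e\<in>(UNIV::('t \<Rightarrow> bool) set). \<bar>S e\<bar>)"
  define M2 where "M2 = (\<Sum>e\<in>(UNIV::('t \<Rightarrow> bool) set). (S e)^2)"
  define M3 where "M3 = (\<Sum>e\<in>(UNIV::('t \<Rightarrow> bool) set). \<bar>S e\<bar>^3)"
  define M4 where "M4 = (\<Sum>e\<in>(UNIV::('t \<Rightarrow> bool) set). (S e)^4)"
  have M2e: "M2 = N * Q" unfolding M2_def S_def N_def Q_def by (rule m2) simp
  have M4e: "M4 \<le> 3 * N * Q^2" unfolding M4_def S_def N_def Q_def by (rule m4) simp
  have N0: "N > 0" unfolding N_def by simp
  have Q0: "Q \<ge> 0" unfolding Q_def by (simp add: sum_nonneg)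
  have P0: "P \<ge> 0" unfolding P_def by (simp add: sum_nonneg)
  have M30: "M3 \<ge> 0" unfolding M3_def by (simp add: sum_nonneg)
  have cs1: "M2^2 \<le> P * M3"
  proof -
    have "M2 = (\<Sum>e\<in>UNIV. sqrt \<bar>S e\<bar> * (sqrt \<bar>S e\<bar> * \<bar>S e\<bar>))"
      unfolding M2_def
      by (intro sum.cong refl) (simp only: mult.assoc[symmetric] real_sqrt_mult_self abs_mult_self_eq power2_eq_square)
    then have "M2^2 \<le> (\<Sum>e\<in>UNIV. (sqrt \<bar>S e\<bar>)^2) * (\<Sum>e\<in>UNIV. (sqrt \<bar>S e\<bar> * \<bar>S e\<bar>)^2)"
      using Cauchy_Schwarz_ineq_sum by metis
    also have "\<dots> = P * M3" unfolding P_def M3_def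
    proof (intro arg_cong2[where f="(*)"] sum.cong refl)
      fix e show "(sqrt \<bar>S e\<bar> * \<bar>S e\<bar>)^2 = \<bar>S e\<bar>^3"
        by (simp add: power_mult_distrib) (simp add: power3_eq_cube power2_eq_square)
    qed simp
    finally show ?thesis .
  qed
  have cs2: "M3^2 \<le> M2 * M4"
  proof -
    have "M3 = (\<Sum>e\<in>UNIV. \<bar>S e\<bar> * (S e)^2)"
      unfolding M3_def by (intro sum.cong) (auto simp: power2_eq_square power3_eq_cube)
    then have "M3^2 \<le> (\<Sum>e\<in>UNIV. \<bar>S e\<bar>^2) * (\<Sum>e\<in>UNIV. ((S e)^2)^2)"
      using Cauchy_Schwarz_ineq_sum by metis
    also have "\<dots> = M2 * M4" unfolding M2_def M4_def by simp
    finally show ?thesis .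
  qed
  have cs3: "P^2 \<le> N * M2"
  proof -
    have "P^2 = (\<Sum>e\<in>UNIV. 1 * \<bar>S e\<bar>)^2" unfolding P_def by simp
    also have "\<dots> \<le> (\<Sum>e\<in>(UNIV::('t \<Rightarrow> bool) set). 1^2) * (\<Sum>e\<in>UNIV. \<bar>S e\<bar>^2)"
      by (rule Cauchy_Schwarz_ineq_sum)
    also have "\<dots> = N * M2" unfolding N_def M2_def by simp
    finally show ?thesis .
  qed
  have up: "P \<le> N * sqrt Q"
  proof -
    have "P^2 \<le> (N * sqrt Q)^2" proof -
      have "(N * sqrt Q)^2 = N * (N * Q)" using Q0 by (simp add: power_mult_distrib power2_eq_square)
      then show ?thesis using cs3 M2e by simp
    qed
    then show ?thesis using N0 Q0 by (meson power2_le_imp_le mult_nonneg_nonneg real_sqrt_ge_zero less_imp_le)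
  qed
  have lo: "N * sqrt Q / 2 \<le> P"
  proof (cases "Q = 0")
    case True then show ?thesis using P0 by simp
  next
    case False
    then have Qp: "Q > 0" using Q0 by simp
    have "(M2^2)^2 \<le> (P * M3)^2" using cs1 by (intro power_mono) auto
    also have "\<dots> = P^2 * M3^2" by (simp add: power_mult_distrib)
    also have "\<dots> \<le> P^2 * (M2 * M4)" using cs2 by (simp add: mult_left_mono)
    also have "\<dots> \<le> P^2 * (N * Q * (3 * N * Q^2))"
      using M4e M2e N0 Q0 by (intro mult_left_mono) (auto intro!: mult_left_mono)
    finally have "(N*Q)^4 \<le> P^2 * (3 * N^2 * Q^3)" by (simp add: M2e power2_eq_square power3_eq_cube power4_eq_xxxx algebra_simps)
    then have "(N^2 * Q^3) * (N^2 * Q) \<le> (N^2 * Q^3) * (3 * P^2)"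
      by (simp add: power2_eq_square power3_eq_cube power4_eq_xxxx algebra_simps)
    then have "N^2 * Q \<le> 3 * P^2" using Qp N0 by (subst (asm) mult_le_cancel_left_pos) auto
    then have "(N * sqrt Q / 2)^2 \<le> P^2" using Q0 by (simp add: power_mult_distrib power_divide) (smt (verit) zero_le_power2)
    then show ?thesis using P0 by (meson power2_le_imp_le)
  qed
  show ?thesis using up lo unfolding P_def S_def by simp
qed


lemma sum_l1:
  fixes M :: "real^'t^'m"
  shows "(\<Sum>e\<in>(UNIV::('t \<Rightarrow> bool) set). l1norm (M *v (\<chi> j. sg (e j))))
       = (\<Sum>i\<in>UNIV. \<Sum>e\<in>(UNIV::('t \<Rightarrow> bool) set). \<bar>SJ UNIV (\<lambda>j. M$i$j) e\<bar>)"
  unfolding l1norm_def matrix_vector_mult_def SJ_def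
  by (subst sum.swap) (simp add: mult.commute)

lemma norm12_bounds:
  fixes M :: "real^'t^'m"
  shows "real CARD('t \<Rightarrow> bool) / 2 * norm12 M \<le> (\<Sum>e\<in>(UNIV::('t \<Rightarrow> bool) set). l1norm (M *v (\<chi> j. sg (e j))))
    \<and> (\<Sum>e\<in>(UNIV::('t \<Rightarrow> bool) set). l1norm (M *v (\<chi> j. sg (e j)))) \<le> real CARD('t \<Rightarrow> bool) * norm12 M"
proof -
  let ?N = "real CARD('t \<Rightarrow> bool)"
  have b: "\<And>i. ?N * sqrt (\<Sum>j\<in>UNIV. (M$i$j)^2) / 2 \<le> (\<Sum>e\<in>(UNIV::('t \<Rightarrow> bool) set). \<bar>SJ UNIV (\<lambda>j. M$i$j) e\<bar>)
       \<and> (\<Sum>e\<in>(UNIV::('t \<Rightarrow> bool) set). \<bar>SJ UNIV (\<lambda>j. M$i$j) e\<bar>) \<le> ?N * sqrt (\<Sum>j\<in>UNIV. (M$i$j)^2)"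
    by (rule avg_bounds)
  have "?N / 2 * norm12 M = (\<Sum>i\<in>UNIV. ?N * sqrt (\<Sum>j\<in>UNIV. (M$i$j)^2) / 2)"
    unfolding norm12_def by (simp add: sum_distrib_left sum_divide_distrib)
  also have "\<dots> \<le> (\<Sum>i\<in>UNIV. \<Sum>e\<in>(UNIV::('t \<Rightarrow> bool) set). \<bar>SJ UNIV (\<lambda>j. M$i$j) e\<bar>)"
    using b by (intro sum_mono) auto
  finally have 1: "?N / 2 * norm12 M \<le> \<dots>" .
  have "(\<Sum>i\<in>UNIV. \<Sum>e\<in>(UNIV::('t \<Rightarrow> bool) set). \<bar>SJ UNIV (\<lambda>j. M$i$j) e\<bar>)
      \<le> (\<Sum>i\<in>UNIV. ?N * sqrt (\<Sum>j\<in>UNIV. (M$i$j)^2))"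
    using b by (intro sum_mono) auto
  also have "\<dots> = ?N * norm12 M" unfolding norm12_def by (simp add: sum_distrib_left)
  finally show ?thesis using 1 unfolding sum_l1 by simp
qed

theorem mainTheorem7:
  fixes A :: "real ^ 'r ^ 'n" and L :: "real ^ 'n ^ 's"
    and X :: "real ^ 't ^ 'r" and \<alpha> \<beta> :: real
  assumes "0 < \<alpha>" and "\<alpha> \<le> \<beta>"
    and "\<And>y :: real ^ 'r. \<alpha> * l1norm (A *v y) \<le> l1norm (L *v (A *v y))
             \<and> l1norm (L *v (A *v y)) \<le> \<beta> * l1norm (A *v y)"
  shows "\<alpha> / 2 * norm12 (A ** X) \<le> norm12 (L ** A ** X)
         \<and> norm12 (L ** A ** X) \<le> 2 * \<beta> * norm12 (A ** X)"
proof -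
  let ?N = "real CARD('t \<Rightarrow> bool)"
  define s where "s = (\<lambda>e::'t\<Rightarrow>bool. (\<chi> j. sg (e j)) :: real^'t)"
  define S1 where "S1 = (\<Sum>e\<in>(UNIV::('t \<Rightarrow> bool) set). l1norm ((A ** X) *v s e))"
  define S2 where "S2 = (\<Sum>e\<in>(UNIV::('t \<Rightarrow> bool) set). l1norm ((L ** A ** X) *v s e))"
  have e1: "(A ** X) *v s e = A *v (X *v s e)" for e by (simp add: matrix_vector_mul_assoc)
  have e2: "(L ** A ** X) *v s e = L *v (A *v (X *v s e))" for e
    by (simp add: matrix_vector_mul_assoc matrix_mul_assoc)
  have lo: "\<alpha> * S1 \<le> S2" unfolding S1_def S2_def e1 e2 sum_distrib_left
    using assms(3) by (intro sum_mono) auto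
  have up: "S2 \<le> \<beta> * S1" unfolding S1_def S2_def e1 e2 sum_distrib_left
    using assms(3) by (intro sum_mono) auto
  have B1: "?N / 2 * norm12 (A ** X) \<le> S1 \<and> S1 \<le> ?N * norm12 (A ** X)"
    unfolding S1_def s_def by (rule norm12_bounds)
  have B2: "?N / 2 * norm12 (L ** A ** X) \<le> S2 \<and> S2 \<le> ?N * norm12 (L ** A ** X)"
    unfolding S2_def s_def by (rule norm12_bounds)
  have Np: "?N > 0" by simp
  have "?N * (\<alpha> / 2 * norm12 (A ** X)) \<le> ?N * norm12 (L ** A ** X)"
  proof -
    have "?N * (\<alpha> / 2 * norm12 (A ** X)) = \<alpha> * (?N / 2 * norm12 (A ** X))" by simp
    also have "\<dots> \<le> \<alpha> * S1" using B1 assms(1) by (intro mult_left_mono) auto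
    also have "\<dots> \<le> ?N * norm12 (L ** A ** X)" using lo B2 by linarith
    finally show ?thesis .
  qed
  then have L1: "\<alpha> / 2 * norm12 (A ** X) \<le> norm12 (L ** A ** X)" using Np by simp
  have "?N * norm12 (L ** A ** X) \<le> ?N * (2 * \<beta> * norm12 (A ** X))"
  proof -
    have "?N * norm12 (L ** A ** X) = 2 * (?N / 2 * norm12 (L ** A ** X))" by simp
    also have "\<dots> \<le> 2 * (\<beta> * S1)" using B2 up by linarith
    also have "\<dots> \<le> 2 * (\<beta> * (?N * norm12 (A ** X)))"
      using B1 assms(1,2) by (intro mult_left_mono) auto
    also have "\<dots> = ?N * (2 * \<beta> * norm12 (A ** X))" by simp
    finally show ?thesis .
  qed
  then have L2: "norm12 (L ** A ** X) \<le> 2 * \<beta> * norm12 (A ** X)" using Np by simp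
  show ?thesis using L1 L2 by simp
qed

end
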